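(* Let $k,p,q$ be integers with $q>0$, $\gcd(p,q)=1$ and $kq-p$ odd, and let $Q=Q_2(L)$ be the involutory quandle with generators $a,b,c$ and defining relations $$R1: c^{ab}=c,\qquad R2: a^{(ca)^q}=b^{(ab)^{(kq-p-1)/2}},\qquad R3: a^{(ac)^q}=b^{(ab)^{(kq-p-1)/2}}.$$ Then the following relations also hold in $Q$: $c^{(ac)^{2q}}=c$; $a^{(ca)^{2q}}=a$; $b^{(cb)^{2q}}=b$; $a^{(ba)^{(kq-p-1)/2}}=b^{(bc)^q}$; $a^{(ca)^i(ba)^jc}=a^{(ca)^ic(ba)^j}$ and $a^{(ca)^i(ab)^jabc}=a^{(ca)^{i+1}(ba)^jb}$ for $0\le i\le q$ and $0\le j\le(\vert kq-p\vert-1)/2$; $c^{(ac)^ia}=c^{(ac)^ib}$ for all $i\ge 0$.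
   Context: An involutory quandle is a set with a binary operation $(x,y)\mapsto x^y$ satisfying $x^x=x$, $(x^y)^y=x$ and $(x^y)^z=(x^z)^{(y^z)}$; a presentation $\langle S\mid R\rangle_2$ denotes the involutory quandle generated by $S$ subject to $R$ and these axioms. Exponents are read left to right: $x^{yz}=(x^y)^z$, and $z^w$ for a word $w$ means successive action by its letters; negative powers are interpreted via $(xy)^{-1}=yx$ (e.g. $(ab)^{m}=(ba)^{-m}$). This presentation is the involutory quandle of $L=L(k,p/q)\cup C$, the two-bridge link built from a block of $k$ half-twists and a rational $p/q$-tangle together with an unknotted axis $C$, in the case $kq-p$ odd. *)

theory Defs
  imports Main
begin

text \<open>An involutory quandle structure on the whole type, with operation f x y = x^y.\<close>
definition invq :: "('a \<Rightarrow> 'a \<Rightarrow> 'a) \<Rightarrow> bool" where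
  "invq f \<longleftrightarrow> (\<forall>x. f x x = x) \<and> (\<forall>x y. f (f x y) y = x) \<and>
     (\<forall>x y z. f (f x y) z = f (f x z) (f y z))"

definition act :: "('a \<Rightarrow> 'a \<Rightarrow> 'a) \<Rightarrow> 'a \<Rightarrow> 'a list \<Rightarrow> 'a" where
  "act f x w = foldl f x w"

text \<open>Integer power of a word; negative powers via (xy)^(-1) = yx, i.e. the reversed word.\<close>
definition wpow :: "'a list \<Rightarrow> int \<Rightarrow> 'a list" where
  "wpow w m = (if 0 \<le> m then concat (replicate (nat m) w)
               else concat (replicate (nat (- m)) (rev w)))"

end

theory Submission imports Defs begin

definition eqv :: "('a \<Rightarrow> 'a \<Rightarrow> 'a) \<Rightarrow> 'a list \<Rightarrow> 'a list \<Rightarrow> bool" where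
  "eqv f u v \<longleftrightarrow> (\<forall>x. act f x u = act f x v)"

lemma act_Nil[simp]: "act f x [] = x" by (simp add: act_def)
lemma act_Cons[simp]: "act f x (y # w) = act f (f x y) w" by (simp add: act_def)
lemma act_app: "act f x (u @ v) = act f (act f x u) v" by (simp add: act_def)

lemma invq_inv[simp]: "invq f \<Longrightarrow> f (f x y) y = x" by (simp add: invq_def)
lemma invq_dist: "invq f \<Longrightarrow> f (f x y) z = f (f x z) (f y z)" by (simp add: invq_def)

lemma eqv_refl[simp]: "eqv f u u" by (simp add: eqv_def)
lemma eqv_sym: "eqv f u v \<Longrightarrow> eqv f v u" by (simp add: eqv_def)
lemma eqv_trans[trans]: "eqv f u v \<Longrightarrow> eqv f v w \<Longrightarrow> eqv f u w" by (simp add: eqv_def)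
lemma eqv_app: "eqv f u u' \<Longrightarrow> eqv f v v' \<Longrightarrow> eqv f (u@v) (u'@v')"
  by (simp add: eqv_def act_app)
lemma eqv_ctx: "eqv f u v \<Longrightarrow> eqv f (p @ u @ s) (p @ v @ s)"
  by (simp add: eqv_app)
lemma eqvD: "eqv f u v \<Longrightarrow> act f x u = act f x v" by (simp add: eqv_def)
lemma eqv_cancel: "invq f \<Longrightarrow> eqv f [y,y] []" by (simp add: eqv_def)
lemma eqv_cancel2: "invq f \<Longrightarrow> eqv f (p @ [y,y] @ s) (p @ s)"
  by (simp add: eqv_def act_app)

lemma act_conj: "invq f \<Longrightarrow> f x (act f y w) = act f x (rev w @ y # w)"
proof (induction w arbitrary: x rule: rev_induct)
  case Nil then show ?case by simp
next
  case (snoc z w)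
  let ?Y = "act f y w"
  have "f x (f ?Y z) = f (f (f x z) ?Y) z"
    using invq_dist[OF snoc.prems, of "f x z" ?Y z] snoc.prems by simp
  also have "\<dots> = act f x (rev (w @ [z]) @ y # w @ [z])"
    using snoc by (simp add: act_app)
  finally show ?case by (simp add: act_app)
qed

lemma eqv_conj: "invq f \<Longrightarrow> eqv f [act f y w] (rev w @ y # w)"
  by (simp add: eqv_def act_conj)

lemma concat_rep_snoc: "concat (replicate k w) @ w = w @ concat (replicate k w)"
  by (induction k) auto

lemma rev_concat_rep: "rev (concat (replicate k [u,v])) = concat (replicate k [v,u])"
  by (induction k) (auto simp: concat_rep_snoc)

lemma rev_wpow: "rev (wpow [u,v] n) = wpow [v,u] n"
  by (simp add: wpow_def rev_concat_rep)

lemma wpow_swap: "wpow [v,u] n = wpow [u,v] (-n)"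
  by (simp add: wpow_def)

lemma wpow_0[simp]: "wpow w 0 = []" by (simp add: wpow_def)
lemma wpow_1: "wpow w 1 = w" by (simp add: wpow_def)
lemma wpow_pos: "wpow w (int k) = concat (replicate k w)" by (simp add: wpow_def)
lemma wpow_neg: "wpow [u,v] (- int k) = concat (replicate k [v,u])"
  by (cases "k = 0") (simp_all add: wpow_def)

lemma wpow_step: assumes "invq f"
  shows "eqv f (wpow [u,v] n @ [u,v]) (wpow [u,v] (n+1))"
proof (cases n rule: int_cases)
  case (nonneg m)
  have "n+1 = int (Suc m)" using nonneg by simp
  then have "wpow [u,v] (n+1) = wpow [u,v] (int (Suc m))" by (simp only:)
  then show ?thesis using nonneg by (simp only: wpow_pos) (simp add: concat_rep_snoc)
next
  case (neg m)
  have e: "n + 1 = - int m" using neg by simp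
  show ?thesis unfolding e wpow_neg unfolding neg wpow_neg
    using assms by (simp add: eqv_def act_app concat_rep_snoc[symmetric])
qed

lemma wpow_stepdown: assumes "invq f"
  shows "eqv f (wpow [u,v] n @ [v,u]) (wpow [u,v] (n - 1))"
proof -
  have s: "eqv f (wpow [u,v] (n-1) @ [u,v]) (wpow [u,v] n)"
    using wpow_step[OF assms, of u v "n-1"] by simp
  show ?thesis unfolding eqv_def
  proof
    fix x
    have "act f x (wpow [u,v] n @ [v,u]) = act f (act f x (wpow [u,v] n)) [v,u]"
      by (simp add: act_app)
    also have "\<dots> = act f (act f x (wpow [u,v] (n-1) @ [u,v])) [v,u]"
      using eqvD[OF s] by simp
    also have "\<dots> = act f x (wpow [u,v] (n-1))" using assms by (simp add: act_app)
    finally show "act f x (wpow [u,v] n @ [v,u]) = act f x (wpow [u,v] (n-1))" .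
  qed
qed

lemma wpow_add: assumes "invq f"
  shows "eqv f (wpow [u,v] n @ wpow [u,v] m) (wpow [u,v] (n+m))"
proof (induction m rule: int_induct[where k=0])
  case base then show ?case by simp
next
  case (step1 i)
  have "eqv f (wpow [u,v] n @ wpow [u,v] (i+1)) (wpow [u,v] n @ (wpow [u,v] i @ [u,v]))"
    using eqv_ctx[OF eqv_sym[OF wpow_step[OF assms, of u v i]], of "wpow [u,v] n" "[]"] by simp
  also have "eqv f \<dots> ((wpow [u,v] n @ wpow [u,v] i) @ [u,v])" by simp
  also have "eqv f \<dots> (wpow [u,v] (n+i) @ [u,v])" using eqv_app[OF step1.IH eqv_refl] .
  also have "eqv f \<dots> (wpow [u,v] (n+i+1))" using wpow_step[OF assms] .
  finally show ?case by (simp add: add.assoc)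
next
  case (step2 i)
  have "eqv f (wpow [u,v] n @ wpow [u,v] (i-1)) (wpow [u,v] n @ (wpow [u,v] i @ [v,u]))"
    using eqv_ctx[OF eqv_sym[OF wpow_stepdown[OF assms, of u v i]], of "wpow [u,v] n" "[]"] by simp
  also have "eqv f \<dots> ((wpow [u,v] n @ wpow [u,v] i) @ [v,u])" by simp
  also have "eqv f \<dots> (wpow [u,v] (n+i) @ [v,u])" using eqv_app[OF step2.IH eqv_refl] .
  also have "eqv f \<dots> (wpow [u,v] (n+i-1))" using wpow_stepdown[OF assms] .
  finally show ?case by (simp add: algebra_simps)
qed

lemma act_wpow_add: "invq f \<Longrightarrow> act f x (wpow [u,v] n @ wpow [u,v] m) = act f x (wpow [u,v] (n+m))"
  using eqvD[OF wpow_add] .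

lemma comm_inv: assumes "invq f" "eqv f (s @ [u,v]) ([u,v] @ s)"
  shows "eqv f (s @ [v,u]) ([v,u] @ s)"
  unfolding eqv_def
proof
  fix x
  have "act f x ([v,u] @ s) = act f (act f (act f x [v,u]) (s @ [u,v])) [v,u]"
    using assms(1) by (simp add: act_app)
  also have "\<dots> = act f (act f (act f x [v,u]) ([u,v] @ s)) [v,u]"
    using eqvD[OF assms(2)] by simp
  also have "\<dots> = act f x (s @ [v,u])" using assms(1) by (simp add: act_app)
  finally show "act f x (s @ [v,u]) = act f x ([v,u] @ s)" by simp
qed

lemma comm_rep: assumes "eqv f (s @ w) (w @ s)"
  shows "eqv f (s @ concat (replicate k w)) (concat (replicate k w) @ s)"
proof (induction k)
  case 0 then show ?case by simp
next
  case (Suc k)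
  let ?R = "concat (replicate k w)"
  have "eqv f (s @ w @ ?R) ((s @ w) @ ?R)" by simp
  also have "eqv f \<dots> ((w @ s) @ ?R)" using eqv_app[OF assms eqv_refl] .
  also have "eqv f \<dots> (w @ (s @ ?R))" by simp
  also have "eqv f \<dots> (w @ (?R @ s))" using eqv_app[OF eqv_refl Suc.IH] .
  finally show ?case by simp
qed

lemma comm_wpow: assumes "invq f" "eqv f (s @ [u,v]) ([u,v] @ s)"
  shows "eqv f (s @ wpow [u,v] n) (wpow [u,v] n @ s)"
  using comm_rep[OF assms(2)] comm_rep[OF comm_inv[OF assms]]
  by (simp add: wpow_def)

lemma fix_rep: "act f x w = x \<Longrightarrow> act f x (concat (replicate k w)) = x"
  by (induction k) (auto simp: act_app)

lemma fix_wpow: assumes "invq f" "act f x [u,v] = x"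
  shows "act f x (wpow [u,v] n) = x"
proof -
  have "act f x [v,u] = x"
    using assms by (metis act_Cons act_Nil invq_inv)
  then show ?thesis using assms fix_rep[of f x "[u,v]"] fix_rep[of f x "[v,u]"] by (simp add: wpow_def)
qed

lemma twist_rep: "concat (replicate k [u,v]) @ [u] = u # concat (replicate k [v,u])"
  by (induction k) auto

lemma twist_rep2: assumes "invq f"
  shows "eqv f (concat (replicate k [v,u]) @ [u]) (u # concat (replicate k [u,v]))"
proof (induction k)
  case 0 then show ?case by simp
next
  case (Suc k)
  show ?case using eqvD[OF Suc.IH] assms by (simp add: eqv_def)
qed

lemma twist: assumes "invq f"
  shows "eqv f (wpow [u,v] s @ [u]) (u # wpow [v,u] s)"
proof (cases "0 \<le> s")
  case True then show ?thesis using twist_rep[of "nat s" u v] by (simp add: wpow_def)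
next
  case False then show ?thesis using twist_rep2[OF assms] by (simp add: wpow_def)
qed

lemma rep_double: "concat (replicate (2*k) w) = concat (replicate k (w @ w))"
  by (induction k) auto

lemma eqv_rep: "eqv f w w' \<Longrightarrow> eqv f (concat (replicate k w)) (concat (replicate k w'))"
  by (induction k) (auto intro: eqv_app)

theorem lemma4p3:
  fixes k p q :: int and f :: "'a \<Rightarrow> 'a \<Rightarrow> 'a" and a b c :: 'a
  assumes "q > 0" and "gcd p q = 1" and "odd (k * q - p)"
    and "invq f"
    and R1: "act f c [a, b] = c"
    and R2: "act f a (wpow [c, a] q) = act f b (wpow [a, b] ((k * q - p - 1) div 2))"
    and R3: "act f a (wpow [a, c] q) = act f b (wpow [a, b] ((k * q - p - 1) div 2))"
  shows "act f c (wpow [a, c] (2 * q)) = c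
    \<and> act f a (wpow [c, a] (2 * q)) = a
    \<and> act f b (wpow [c, b] (2 * q)) = b
    \<and> act f a (wpow [b, a] ((k * q - p - 1) div 2)) = act f b (wpow [b, c] q)
    \<and> (\<forall>i j :: nat. int i \<le> q \<longrightarrow> int j \<le> (\<bar>k * q - p\<bar> - 1) div 2 \<longrightarrow>
          act f a (wpow [c, a] (int i) @ wpow [b, a] (int j) @ [c])
            = act f a (wpow [c, a] (int i) @ [c] @ wpow [b, a] (int j))
        \<and> act f a (wpow [c, a] (int i) @ wpow [a, b] (int j) @ [a, b, c])
            = act f a (wpow [c, a] (int i + 1) @ wpow [b, a] (int j) @ [b]))
    \<and> (\<forall>i :: nat. act f c (wpow [a, c] (int i) @ [a]) = act f c (wpow [a, c] (int i) @ [b]))"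
proof -
  note inv = assms(4)
  define n where "n = (k * q - p - 1) div 2"
  define m where "m = 2 * n + 1"
  define B where "B = act f b (wpow [a, b] n)"
  have R2': "act f a (wpow [c, a] q) = B" using R2 unfolding B_def n_def .
  have R3': "act f a (wpow [a, c] q) = B" using R3 unfolding B_def n_def .
  have R1': "f c a = f c b"
  proof -
    have "f c a = f (f (f c a) b) b" using inv by simp
    also have "\<dots> = f c b" using R1 by simp
    finally show ?thesis .
  qed
  have E1base: "eqv f ([c] @ [a,b]) ([a,b] @ [c])"
    unfolding eqv_def
  proof
    fix x
    have "act f x ([a,b] @ [c]) = f (act f x [a,b]) (act f c [a,b])"
      using R1 by (simp add: act_app)
    also have "\<dots> = act f (act f x [a,b]) ([b,a] @ c # [a,b])"
      by (simp only: act_conj[OF inv, of "act f x [a,b]" c "[a,b]"]) simp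
    also have "\<dots> = act f x ([c] @ [a,b])" using inv by (simp add: act_app)
    finally show "act f x ([c] @ [a,b]) = act f x ([a,b] @ [c])" by simp
  qed
  have E1: "eqv f ([c] @ wpow [a,b] s) (wpow [a,b] s @ [c])" for s
    using comm_wpow[OF inv E1base] .
  have cfix: "act f c (wpow [a,b] s) = c" for s
    using fix_wpow[OF inv R1] .
  have G2: "act f a (wpow [c, a] (2 * q)) = a"
  proof -
    have "act f a (wpow [c, a] (2 * q)) = act f a (wpow [c,a] q @ wpow [c,a] q)"
      using act_wpow_add[OF inv, of a c a q q] by simp
    also have "\<dots> = act f (act f a (wpow [a,c] q)) (wpow [a,c] (-q))"
      using R2' R3' by (simp add: act_app wpow_swap[of c a])
    also have "\<dots> = act f a (wpow [a,c] (q + -q))"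
      using act_wpow_add[OF inv] by (simp add: act_app)
    finally show ?thesis by simp
  qed
  have G2': "act f a (wpow [a, c] (2 * q)) = a"
  proof -
    have "act f a (wpow [a,c] (-(2*q))) = a" using G2 by (simp add: wpow_swap[of c a])
    then have "act f a (wpow [a, c] (2 * q)) = act f a (wpow [a,c] (-(2*q)) @ wpow [a,c] (2*q))"
      by (simp add: act_app)
    also have "\<dots> = a" using act_wpow_add[OF inv] by simp
    finally show ?thesis .
  qed
  have eq1: "eqv f (a # [B]) (wpow [a,c] (2*q))"
  proof -
    have "eqv f ([a] @ [B] @ []) ([a] @ (wpow [c,a] q @ a # wpow [a,c] q) @ [])"
      using eqv_ctx[OF eqv_conj[OF inv, of a "wpow [a,c] q"], of "[a]" "[]"] R3' by (simp add: rev_wpow)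
    also have "eqv f \<dots> ([] @ (wpow [a,c] q @ [a]) @ (a # wpow [a,c] q))"
      using eqv_ctx[OF eqv_sym[OF twist[OF inv, of a c q]], of "[]" "a # wpow [a,c] q"] by simp
    also have "eqv f \<dots> (wpow [a,c] q @ [a,a] @ wpow [a,c] q)" by simp
    also have "eqv f \<dots> (wpow [a,c] q @ wpow [a,c] q)" using eqv_cancel2[OF inv] .
    also have "eqv f \<dots> (wpow [a,c] (q+q))" using wpow_add[OF inv] .
    finally show ?thesis by simp
  qed
  have eq2: "eqv f (a # [B]) (wpow [a,b] m)"
  proof -
    have "eqv f ([a] @ [B] @ []) ([a] @ (wpow [b,a] n @ b # wpow [a,b] n) @ [])"
      using eqv_ctx[OF eqv_conj[OF inv, of b "wpow [a,b] n"], of "[a]" "[]"] unfolding B_def by (simp add: rev_wpow)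
    also have "eqv f \<dots> ([] @ (wpow [a,b] n @ [a]) @ (b # wpow [a,b] n))"
      using eqv_ctx[OF eqv_sym[OF twist[OF inv, of a b n]], of "[]" "b # wpow [a,b] n"] by simp
    also have "eqv f \<dots> ((wpow [a,b] n @ wpow [a,b] 1) @ wpow [a,b] n)" by (simp add: wpow_1)
    also have "eqv f \<dots> (wpow [a,b] (n+1) @ wpow [a,b] n)"
      using eqv_app[OF wpow_add[OF inv] eqv_refl] .
    also have "eqv f \<dots> (wpow [a,b] (n+1+n))" using wpow_add[OF inv] .
    finally show ?thesis by (simp add: m_def algebra_simps)
  qed
  have E2: "act f x (wpow [a,c] (2*q)) = act f x (wpow [a,b] m)" for x
    using eqvD[OF eqv_trans[OF eqv_sym[OF eq1] eq2]] .
  have G1: "act f c (wpow [a, c] (2 * q)) = c" using E2 cfix by simp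
  have E2neg: "act f x (wpow [a,c] (-(2*q))) = act f x (wpow [a,b] (-m))" for x
  proof -
    have "act f x (wpow [a,c] (-(2*q))) = act f x (wpow [a,b] (-m) @ wpow [a,b] m @ wpow [a,c] (-(2*q)))"
      using act_wpow_add[OF inv, of "x" a b "-m" m] by (simp add: act_app)
    also have "\<dots> = act f (act f (act f x (wpow [a,b] (-m))) (wpow [a,c] (2*q))) (wpow [a,c] (-(2*q)))"
      using E2 by (simp add: act_app)
    also have "\<dots> = act f x (wpow [a,b] (-m))"
      using act_wpow_add[OF inv, of _ a c "2*q" "-(2*q)"] by (simp add: act_app)
    finally show ?thesis .
  qed
  have bB: "act f B (wpow [a,b] (-n)) = b"
    using act_wpow_add[OF inv, of b a b n "-n"] unfolding B_def by (simp add: act_app)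
  have G3: "act f b (wpow [c, b] (2 * q)) = b"
  proof -
    have cb: "eqv f [c,b,c,b] [c,a,c,a]"
    proof -
      have "eqv f ([c] @ [b,c,b]) ([c] @ [a,a] @ [b,c,b])"
        using eqv_sym[OF eqv_cancel2[OF inv, of "[c]" a "[b,c,b]"]] by simp
      also have "eqv f \<dots> ([c,a] @ ([a,b] @ [c]) @ [b])" by simp
      also have "eqv f \<dots> ([c,a] @ ([c] @ [a,b]) @ [b])"
        using eqv_ctx[OF eqv_sym[OF E1base]] .
      also have "eqv f \<dots> ([c,a,c,a] @ [b,b] @ [])" by simp
      also have "eqv f \<dots> ([c,a,c,a] @ [])" using eqv_cancel2[OF inv] .
      finally show ?thesis by simp
    qed
    have q2: "2 * q = int (2 * nat q)" using assms(1) by simp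
    have "eqv f (wpow [c,b] (2*q)) (wpow [c,a] (2*q))"
      unfolding q2 wpow_pos rep_double using eqv_rep[OF cb] by simp
    then have "act f b (wpow [c, b] (2 * q)) = act f b (wpow [a,c] (-(2*q)))"
      using eqvD by (metis wpow_swap)
    also have "\<dots> = act f b (wpow [a,b] (-m))" using E2neg .
    also have "\<dots> = act f B (wpow [a,b] (-n) @ wpow [a,b] (-m))"
      using bB by (simp add: act_app)
    also have "\<dots> = act f B (wpow [a,b] (-m) @ wpow [a,b] (-n))"
      using act_wpow_add[OF inv, of B a b "-n" "-m"] act_wpow_add[OF inv, of B a b "-m" "-n"]
      by (simp add: add.commute)
    also have "\<dots> = act f (act f B (wpow [a,c] (-(2*q)))) (wpow [a,b] (-n))"
      using E2neg by (simp add: act_app)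
    also have "act f B (wpow [a,c] (-(2*q))) = B"
    proof -
      have "act f B (wpow [a,c] (-(2*q))) = act f a (wpow [a,c] q @ wpow [a,c] (-(2*q)))"
        using R3' by (simp add: act_app)
      also have "\<dots> = act f a (wpow [a,c] (-q))" using act_wpow_add[OF inv] by simp
      also have "\<dots> = B" using R2' by (simp add: wpow_swap[of c a])
      finally show ?thesis .
    qed
    finally show ?thesis using bB by simp
  qed
  have S: "act f b (wpow [b,c] (int j)) = act f a (wpow [a,c] (q + int j) @ wpow [a,b] (-n))" for j
  proof (induction j)
    case 0
    show ?case using R3' bB by (simp add: act_app)
  next
    case (Suc j)
    have st: "act f b (wpow [b,c] (int (Suc j))) = act f b (wpow [b,c] (int j) @ [b,c])"
      using eqvD[OF wpow_step[OF inv, of b c "int j"]] by (simp add: add.commute)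
    have ch: "eqv f (wpow [a,b] (-n) @ [b,c]) ([a,c] @ wpow [a,b] (n+1))"
    proof -
      have "eqv f (wpow [a,b] (-n) @ [b,c]) (wpow [a,b] (-n) @ [a,a] @ [b,c])"
        using eqv_sym[OF eqv_cancel2[OF inv]] .
      also have "eqv f \<dots> ((wpow [a,b] (-n) @ [a]) @ ([a,b] @ [c]) @ [])" by simp
      also have "eqv f \<dots> ((wpow [a,b] (-n) @ [a]) @ ([c] @ [a,b]) @ [])"
        using eqv_ctx[OF eqv_sym[OF E1base]] .
      also have "eqv f \<dots> ([] @ (wpow [a,b] (-n) @ [a]) @ ([c] @ [a,b]))" by simp
      also have "eqv f \<dots> ([] @ (a # wpow [b,a] (-n)) @ ([c] @ [a,b]))"
        using eqv_ctx[OF twist[OF inv]] .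
      also have "eqv f \<dots> ([a] @ (wpow [a,b] n @ [c]) @ [a,b])" by (simp add: wpow_swap[of b a])
      also have "eqv f \<dots> ([a] @ ([c] @ wpow [a,b] n) @ [a,b])"
        using eqv_ctx[OF eqv_sym[OF E1]] .
      also have "eqv f \<dots> ([a,c] @ (wpow [a,b] n @ wpow [a,b] 1))" by (simp add: wpow_1)
      also have "eqv f \<dots> ([a,c] @ wpow [a,b] (n+1))"
        using eqv_app[OF eqv_refl wpow_add[OF inv]] .
      finally show ?thesis .
    qed
    have "act f b (wpow [b,c] (int (Suc j)))
        = act f a (wpow [a,c] (q + int j) @ (wpow [a,b] (-n) @ [b,c]))"
      using st Suc.IH by (simp add: act_app)
    also have "\<dots> = act f a (wpow [a,c] (q + int j) @ ([a,c] @ wpow [a,b] (n+1)))"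
      using eqvD[OF eqv_app[OF eqv_refl ch]] .
    also have "\<dots> = act f a ((wpow [a,c] (q + int j) @ [a,c]) @ wpow [a,b] (n+1))" by simp
    also have "\<dots> = act f a (wpow [a,c] (q + int j + 1) @ wpow [a,b] (n+1))"
      using eqvD[OF eqv_app[OF wpow_step[OF inv] eqv_refl]] .
    also have "\<dots> = act f a (wpow [a,c] (q + int j + 1) @ (wpow [a,b] m @ wpow [a,b] (-n)))"
      using act_wpow_add[OF inv, of _ a b m "-n"] by (simp add: act_app m_def algebra_simps)
    also have "\<dots> = act f (act f (act f a (wpow [a,c] (q + int j + 1))) (wpow [a,c] (2*q))) (wpow [a,b] (-n))"
      using E2 by (simp add: act_app)
    also have "act f (act f a (wpow [a,c] (q + int j + 1))) (wpow [a,c] (2*q)) = act f a (wpow [a,c] (q + int j + 1))"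
    proof -
      have "act f (act f a (wpow [a,c] (q + int j + 1))) (wpow [a,c] (2*q))
          = act f a (wpow [a,c] (q + int j + 1 + 2*q))"
        using act_wpow_add[OF inv] by (simp add: act_app)
      also have "\<dots> = act f a (wpow [a,c] (2*q) @ wpow [a,c] (q + int j + 1))"
        using act_wpow_add[OF inv, of a a c "2*q" "q + int j + 1"] by (simp add: algebra_simps)
      also have "\<dots> = act f a (wpow [a,c] (q + int j + 1))" using G2' by (simp add: act_app)
      finally show ?thesis .
    qed
    finally show ?case by (simp add: act_app algebra_simps)
  qed
  have G4: "act f a (wpow [b, a] ((k * q - p - 1) div 2)) = act f b (wpow [b, c] q)"
  proof -
    have "act f b (wpow [b, c] q) = act f b (wpow [b,c] (int (nat q)))" using assms(1) by simp
    also have "\<dots> = act f a (wpow [a,c] (2*q) @ wpow [a,b] (-n))" using S[of "nat q"] assms(1) by simp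
    also have "\<dots> = act f a (wpow [a,b] (-n))" using G2' by (simp add: act_app)
    finally show ?thesis by (simp add: n_def wpow_swap[of b a])
  qed
  have G5: "act f a (wpow [c, a] (int i) @ wpow [b, a] (int j) @ [c])
            = act f a (wpow [c, a] (int i) @ [c] @ wpow [b, a] (int j))
        \<and> act f a (wpow [c, a] (int i) @ wpow [a, b] (int j) @ [a, b, c])
            = act f a (wpow [c, a] (int i + 1) @ wpow [b, a] (int j) @ [b])" for i j :: nat
  proof
    show "act f a (wpow [c, a] (int i) @ wpow [b, a] (int j) @ [c])
            = act f a (wpow [c, a] (int i) @ [c] @ wpow [b, a] (int j))"
      using eqvD[OF eqv_ctx[OF eqv_sym[OF E1[of "- int j"]], of "wpow [c,a] (int i)" "[]"]]
      by (simp add: wpow_swap[of b a])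
    have L: "eqv f (wpow [c, a] (int i) @ wpow [a, b] (int j) @ [a, b, c])
               (wpow [c,a] (int i) @ [c] @ wpow [a,b] (int j + 1))"
    proof -
      have "eqv f (wpow [c, a] (int i) @ wpow [a, b] (int j) @ [a, b, c])
               (wpow [c, a] (int i) @ (wpow [a, b] (int j) @ wpow [a,b] 1) @ [c])" by (simp add: wpow_1)
      also have "eqv f \<dots> (wpow [c, a] (int i) @ wpow [a, b] (int j + 1) @ [c])"
        using eqv_ctx[OF wpow_add[OF inv]] .
      also have "eqv f \<dots> (wpow [c, a] (int i) @ ([c] @ wpow [a, b] (int j + 1)) @ [])"
        using eqv_ctx[OF eqv_sym[OF E1], of "wpow [c, a] (int i)" "int j + 1" "[]"] by simp
      finally show ?thesis by simp
    qed
    have R: "eqv f (wpow [c, a] (int i + 1) @ wpow [b, a] (int j) @ [b])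
               (wpow [c,a] (int i) @ [c] @ wpow [a,b] (int j + 1))"
    proof -
      have "eqv f (wpow [c, a] (int i + 1) @ wpow [b, a] (int j) @ [b])
               ((wpow [c, a] (int i) @ [c,a]) @ wpow [b, a] (int j) @ [b])"
        using eqv_app[OF eqv_sym[OF wpow_step[OF inv]] eqv_refl] .
      also have "eqv f \<dots> ((wpow [c, a] (int i) @ [c]) @ (a # wpow [b, a] (int j)) @ [b])" by simp
      also have "eqv f \<dots> ((wpow [c, a] (int i) @ [c]) @ (wpow [a, b] (int j) @ [a]) @ [b])"
        using eqv_ctx[OF eqv_sym[OF twist[OF inv]]] .
      also have "eqv f \<dots> ((wpow [c, a] (int i) @ [c]) @ (wpow [a, b] (int j) @ wpow [a,b] 1) @ [])"
        by (simp add: wpow_1)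
      also have "eqv f \<dots> ((wpow [c, a] (int i) @ [c]) @ wpow [a, b] (int j + 1) @ [])"
        using eqv_ctx[OF wpow_add[OF inv]] .
      finally show ?thesis by simp
    qed
    show "act f a (wpow [c, a] (int i) @ wpow [a, b] (int j) @ [a, b, c])
            = act f a (wpow [c, a] (int i + 1) @ wpow [b, a] (int j) @ [b])"
      using eqvD[OF L] eqvD[OF R] by simp
  qed
  have P6: "act f c (wpow [a,c] (int i) @ [a,b]) = act f c (wpow [a,c] (int i))" for i
  proof (induction i)
    case 0 then show ?case using R1 by simp
  next
    case (Suc i)
    let ?Y = "act f c (wpow [a,c] (int i))"
    have ab: "f ?Y a = f ?Y b"
    proof -
      have "f ?Y a = f (f (f ?Y a) b) b" using inv by simp
      also have "\<dots> = f ?Y b" using Suc.IH by (simp add: act_app)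
      finally show ?thesis .
    qed
    have ch: "eqv f (wpow [a,c] (int (Suc i)) @ [a,b]) (wpow [a,c] (int i) @ [b,c])"
    proof -
      have "eqv f (wpow [a,c] (int (Suc i)) @ [a,b]) ((wpow [a,c] (int i) @ [a,c]) @ [a,b])"
        using eqv_app[OF eqv_sym[OF wpow_step[OF inv, of a c "int i"]] eqv_refl, of "[a,b]"] by (simp add: add.commute)
      also have "eqv f \<dots> ((wpow [a,c] (int i) @ [a]) @ ([c] @ [a,b]) @ [])" by simp
      also have "eqv f \<dots> ((wpow [a,c] (int i) @ [a]) @ ([a,b] @ [c]) @ [])"
        using eqv_ctx[OF E1base] .
      also have "eqv f \<dots> (wpow [a,c] (int i) @ [a,a] @ [b,c])" by simp
      also have "eqv f \<dots> (wpow [a,c] (int i) @ [b,c])" using eqv_cancel2[OF inv] .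
      finally show ?thesis .
    qed
    have "act f c (wpow [a,c] (int (Suc i)) @ [a,b]) = act f c (wpow [a,c] (int i) @ [b,c])"
      using eqvD[OF ch] .
    also have "\<dots> = act f c (wpow [a,c] (int i) @ [a,c])" using ab by (simp add: act_app)
    also have "\<dots> = act f c (wpow [a,c] (int (Suc i)))"
      using eqvD[OF wpow_step[OF inv]] by (simp add: add.commute)
    finally show ?case .
  qed
  have G6: "act f c (wpow [a, c] (int i) @ [a]) = act f c (wpow [a, c] (int i) @ [b])" for i
  proof -
    let ?Y = "act f c (wpow [a,c] (int i))"
    have "f ?Y a = f (f (f ?Y a) b) b" using inv by simp
    also have "\<dots> = f ?Y b" using P6[of i] by (simp add: act_app)
    finally show ?thesis by (simp add: act_app)
  qed
  show ?thesis using G1 G2 G3 G4 G5 G6 by blast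
qed

end
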